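(* Let $\mathbb{K}$ be an infinite field and $P=[f_1,\ldots,f_n]$ a generic sequence of homogeneous polynomials in $\mathbb{K}[x_1,\ldots,x_n]$ with $\deg f_i=d_i$. If the Moreno-Socías conjecture holds, then for any term $\mathbf{u}\notin\mathrm{lt}(\langle P\rangle)$, the term $x_1\mathbf{u}$ either is not in $\mathrm{lt}(\langle P\rangle)$ or is a minimal generator of $\mathrm{lt}(\langle P\rangle)$.
   Context: DRL is the degree reverse lexicographic ordering with $x_1<\cdots<x_n$, and $\mathrm{lt}(\langle P\rangle)$ is the leading term ideal w.r.t. DRL. A property holds for a generic sequence if it holds on a nonempty Zariski-open subset of the coefficient space. A monomial ideal $J$ is weakly reverse lexicographic if, for each minimal generator $\mathbf{t}$, every term of the same total degree greater than $\mathbf{t}$ w.r.t. DRL lies in $J$. Moreno-Socías conjecture: for every infinite field and every generic sequence of $n$ polynomials in $n$ variables, the DRL leading term ideal of the ideal it generates is weakly reverse lexicographic. *)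

theory Defs
  imports Main "HOL-Library.Poly_Mapping"
begin

text \<open>Terms (monomials) in variables x_1,...,x_n are exponent vectors
  nat =>0 nat; variable x_(i+1) is represented by index i, so x_1 is index 0.
  Polynomials are finitely supported maps from terms to coefficients.\<close>

type_synonym term_ = "nat \<Rightarrow>\<^sub>0 nat"
type_synonym 'a mpoly_ = "term_ \<Rightarrow>\<^sub>0 'a"

definition tdeg :: "term_ \<Rightarrow> nat" where
  "tdeg t = (\<Sum>i\<in>Poly_Mapping.keys t. Poly_Mapping.lookup t i)"

definition is_term :: "nat \<Rightarrow> term_ \<Rightarrow> bool" where
  "is_term n t \<longleftrightarrow> Poly_Mapping.keys t \<subseteq> {..<n}"

definition in_vars :: "nat \<Rightarrow> 'a::zero mpoly_ \<Rightarrow> bool" where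
  "in_vars n p \<longleftrightarrow> (\<forall>t\<in>Poly_Mapping.keys p. is_term n t)"

definition homogeneous_of :: "nat \<Rightarrow> nat \<Rightarrow> 'a::zero mpoly_ \<Rightarrow> bool" where
  "homogeneous_of n k p \<longleftrightarrow> in_vars n p \<and> (\<forall>t\<in>Poly_Mapping.keys p. tdeg t = k)"

text \<open>DRL with x_1 < ... < x_n: s <_DRL t iff deg s < deg t, or the degrees are
  equal and at the smallest variable index i where s and t differ, t has the
  smaller exponent.\<close>
definition drl_less :: "term_ \<Rightarrow> term_ \<Rightarrow> bool" where
  "drl_less s t \<longleftrightarrow> tdeg s < tdeg t \<or>
     (tdeg s = tdeg t \<and> (\<exists>i. Poly_Mapping.lookup t i < Poly_Mapping.lookup s i \<and> (\<forall>j<i. Poly_Mapping.lookup s j = Poly_Mapping.lookup t j)))"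

definition lterm :: "'a::zero mpoly_ \<Rightarrow> term_" where
  "lterm p = (THE t. t \<in> Poly_Mapping.keys p \<and> (\<forall>s\<in>Poly_Mapping.keys p. s \<noteq> t \<longrightarrow> drl_less s t))"

definition tdvd :: "term_ \<Rightarrow> term_ \<Rightarrow> bool" where
  "tdvd s t \<longleftrightarrow> (\<forall>i. Poly_Mapping.lookup s i \<le> Poly_Mapping.lookup t i)"

definition ideal_gen :: "nat \<Rightarrow> (nat \<Rightarrow> 'a::comm_ring_1 mpoly_) \<Rightarrow> 'a mpoly_ set" where
  "ideal_gen n P = {\<Sum>i<n. q i * P i | q. \<forall>i<n. in_vars n (q i)}"

definition lt_ideal :: "nat \<Rightarrow> (nat \<Rightarrow> 'a::comm_ring_1 mpoly_) \<Rightarrow> term_ set" where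
  "lt_ideal n P = {t. is_term n t \<and> (\<exists>p\<in>ideal_gen n P. p \<noteq> 0 \<and> tdvd (lterm p) t)}"

definition min_gen :: "term_ set \<Rightarrow> term_ \<Rightarrow> bool" where
  "min_gen J t \<longleftrightarrow> t \<in> J \<and> (\<forall>s. tdvd s t \<and> s \<noteq> t \<longrightarrow> s \<notin> J)"

definition weakly_revlex :: "nat \<Rightarrow> term_ set \<Rightarrow> bool" where
  "weakly_revlex n J \<longleftrightarrow> (\<forall>t. min_gen J t \<longrightarrow>
      (\<forall>s. is_term n s \<and> tdeg s = tdeg t \<and> drl_less t s \<longrightarrow> s \<in> J))"

text \<open>Coefficient space of sequences [f_1..f_n] of homogeneous polynomials with
  deg f_i = d_i (index i-1); entries beyond n are normalised to 0. Its coordinates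
  are the coefficients Poly_Mapping.lookup (P i) t.\<close>
definition coeff_space :: "nat \<Rightarrow> (nat \<Rightarrow> nat) \<Rightarrow> (nat \<Rightarrow> 'a::zero mpoly_) set" where
  "coeff_space n d = {P. (\<forall>i<n. homogeneous_of n (d i) (P i)) \<and> (\<forall>i\<ge>n. P i = 0)}"

definition peval :: "(('v \<Rightarrow>\<^sub>0 nat) \<Rightarrow>\<^sub>0 'a::comm_ring_1) \<Rightarrow> ('v \<Rightarrow> 'a) \<Rightarrow> 'a" where
  "peval g x = (\<Sum>m\<in>Poly_Mapping.keys g. Poly_Mapping.lookup g m * (\<Prod>v\<in>Poly_Mapping.keys m. x v ^ Poly_Mapping.lookup m v))"

definition zariski_open :: "nat \<Rightarrow> (nat \<Rightarrow> nat) \<Rightarrow> (nat \<Rightarrow> 'a::comm_ring_1 mpoly_) set \<Rightarrow> bool" where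
  "zariski_open n d U \<longleftrightarrow> (\<exists>S :: (((nat \<times> term_) \<Rightarrow>\<^sub>0 nat) \<Rightarrow>\<^sub>0 'a) set.
      U = {P\<in>coeff_space n d. \<exists>g\<in>S. peval g (\<lambda>(i,t). Poly_Mapping.lookup (P i) t) \<noteq> 0})"

definition generic :: "nat \<Rightarrow> (nat \<Rightarrow> nat) \<Rightarrow> ((nat \<Rightarrow> 'a::comm_ring_1 mpoly_) \<Rightarrow> bool) \<Rightarrow> bool" where
  "generic n d Q \<longleftrightarrow> (\<exists>U. zariski_open n d U \<and> U \<noteq> {} \<and> (\<forall>P\<in>U. Q P))"

definition moreno_socias :: "'a::field itself \<Rightarrow> bool" where
  "moreno_socias _ \<longleftrightarrow> (\<forall>n d. generic n d (\<lambda>P :: nat \<Rightarrow> 'a mpoly_. weakly_revlex n (lt_ideal n P)))"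

end

theory Submission
  imports Defs
begin

lemma tdeg_sum: "is_term n t \<Longrightarrow> tdeg t = (\<Sum>i<n. Poly_Mapping.lookup t i)"
  unfolding tdeg_def is_term_def
  by (rule sum.mono_neutral_left) (auto simp: in_keys_iff)

lemma is_term_iff: "is_term n t \<longleftrightarrow> (\<forall>i. Poly_Mapping.lookup t i \<noteq> 0 \<longrightarrow> i < n)"
  unfolding is_term_def subset_iff in_keys_iff lessThan_iff by blast

lemma tdeg_add: "is_term n a \<Longrightarrow> is_term n b \<Longrightarrow> tdeg (a + b) = tdeg a + tdeg b"
proof -
  assume a: "is_term n a" and b: "is_term n b"
  have ab: "is_term n (a + b)" using a b by (auto simp: is_term_iff lookup_add)
  show ?thesis using tdeg_sum[OF ab] tdeg_sum[OF a] tdeg_sum[OF b]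
    by (simp add: lookup_add sum.distrib)
qed

lemma tdeg_single: "k < n \<Longrightarrow> tdeg (Poly_Mapping.single k (1::nat)) = 1"
  unfolding tdeg_def by simp

lemma tdeg_strict: "is_term n t \<Longrightarrow> tdvd s t \<Longrightarrow> s \<noteq> t \<Longrightarrow> tdeg s < tdeg t"
proof -
  assume t: "is_term n t" and st: "tdvd s t" and ne: "s \<noteq> t"
  have s: "is_term n s" using t st unfolding is_term_iff tdvd_def
    by (metis le_zero_eq)
  obtain i where i: "Poly_Mapping.lookup s i \<noteq> Poly_Mapping.lookup t i" using ne by (meson poly_mapping_eqI)
  then have lt: "Poly_Mapping.lookup s i < Poly_Mapping.lookup t i" using st unfolding tdvd_def
    by (simp add: order_neq_le_trans)
  then have "i < n" using t unfolding is_term_iff by auto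
  have "(\<Sum>i<n. Poly_Mapping.lookup s i) < (\<Sum>i<n. Poly_Mapping.lookup t i)"
    by (rule sum_strict_mono_ex1) (use st lt \<open>i<n\<close> in \<open>auto simp: tdvd_def\<close>)
  then show ?thesis using tdeg_sum[OF s] tdeg_sum[OF t] by simp
qed

lemma tdvd_trans: "tdvd a b \<Longrightarrow> tdvd b c \<Longrightarrow> tdvd a c"
  unfolding tdvd_def using le_trans by blast

lemma tdvd_antisym: "tdvd a b \<Longrightarrow> tdvd b a \<Longrightarrow> a = b"
  unfolding tdvd_def by (meson antisym poly_mapping_eqI)

lemma lt_term: "t \<in> lt_ideal n P \<Longrightarrow> is_term n t"
  unfolding lt_ideal_def by auto

lemma lt_up: "t \<in> lt_ideal n P \<Longrightarrow> tdvd t s \<Longrightarrow> is_term n s \<Longrightarrow> s \<in> lt_ideal n P"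
  unfolding lt_ideal_def using tdvd_trans by blast

lemma core:
  fixes P :: "nat \<Rightarrow> 'a::comm_ring_1 mpoly_"
  assumes wr: "weakly_revlex n (lt_ideal n P)" and n: "n \<ge> 1"
    and u: "is_term n u" and nu: "u \<notin> lt_ideal n P"
  shows "u + Poly_Mapping.single 0 1 \<notin> lt_ideal n P \<or>
         min_gen (lt_ideal n P) (u + Poly_Mapping.single 0 1)"
proof (rule ccontr)
  define J where "J = lt_ideal n P"
  define w where "w = u + Poly_Mapping.single 0 (1::nat)"
  assume "\<not> ?thesis"
  then have wJ: "w \<in> J" and nm: "\<not> min_gen J w" unfolding J_def w_def by auto
  then obtain s where s: "tdvd s w" "s \<noteq> w" "s \<in> J" unfolding min_gen_def by auto
  have lw: "\<And>i. Poly_Mapping.lookup w i = Poly_Mapping.lookup u i + (if i = 0 then 1 else 0)"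
    unfolding w_def by (simp add: lookup_add lookup_single)
  define D where "D = {t. t \<in> J \<and> tdvd t s}"
  have "s \<in> D" using s unfolding D_def tdvd_def by auto
  then obtain t where tD: "t \<in> D" and tmin: "\<And>r. r \<in> D \<Longrightarrow> tdeg t \<le> tdeg r"
    using ex_has_least_nat[of "\<lambda>t. t \<in> D" s tdeg] by blast
  have tJ: "t \<in> J" and ts: "tdvd t s" using tD unfolding D_def by auto
  have mg: "min_gen J t"
    unfolding min_gen_def
  proof (intro conjI tJ allI impI)
    fix r assume r: "tdvd r t \<and> r \<noteq> t"
    show "r \<notin> J"
    proof
      assume rJ: "r \<in> J"
      have "r \<in> D" using rJ r ts tdvd_trans unfolding D_def by blast
      moreover have "tdeg r < tdeg t"
        using tdeg_strict[OF lt_term[OF tJ[unfolded J_def]]] r by blast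
      ultimately show False using tmin by fastforce
    qed
  qed
  have tw: "tdvd t w" using ts s(1) tdvd_trans by blast
  have tnw: "t \<noteq> w" using ts s(1,2) tdvd_antisym by blast
  have "\<not> tdvd t u" using lt_up[OF tJ[unfolded J_def] _ u] nu by blast
  then obtain i where i: "Poly_Mapping.lookup u i < Poly_Mapping.lookup t i" unfolding tdvd_def by (meson not_le)
  have twi: "\<And>k. Poly_Mapping.lookup t k \<le> Poly_Mapping.lookup w k" using tw unfolding tdvd_def by blast
  have i0: "i = 0"
  proof (rule ccontr)
    assume "i \<noteq> 0"
    then have "Poly_Mapping.lookup w i = Poly_Mapping.lookup u i" using lw[of i] by simp
    then show False using twi[of i] i by linarith
  qed
  have t0: "Poly_Mapping.lookup t 0 = Poly_Mapping.lookup u 0 + 1"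
    using i i0 twi[of 0] lw[of 0] by simp
  obtain j where j: "Poly_Mapping.lookup t j \<noteq> Poly_Mapping.lookup w j" using tnw by (meson poly_mapping_eqI)
  then have j0: "j \<noteq> 0" using t0 lw[of 0] by (cases "j = 0") auto
  have tj: "Poly_Mapping.lookup t j < Poly_Mapping.lookup u j"
    using j j0 twi[of j] lw[of j] by simp
  have jn: "j < n" using u tj unfolding is_term_iff by auto
  have tt: "is_term n t" using lt_term tJ unfolding J_def by blast
  define s' where "s' = t - Poly_Mapping.single 0 1 + Poly_Mapping.single j (1::nat)"
  have ls': "\<And>k. Poly_Mapping.lookup s' k = Poly_Mapping.lookup t k - (if k = 0 then 1 else 0) + (if k = j then 1 else 0)"
    unfolding s'_def by (simp add: lookup_add lookup_minus lookup_single)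
  have s't: "is_term n s'" using tt jn n unfolding is_term_iff
    by (auto simp: ls' split: if_splits)
  have eq: "s' + Poly_Mapping.single 0 1 = t + Poly_Mapping.single j 1"
    by (rule poly_mapping_eqI) (use t0 j0 in \<open>auto simp: ls' lookup_add lookup_single\<close>)
  have "tdeg s' + 1 = tdeg t + 1"
    using arg_cong[OF eq, of tdeg] tdeg_add[OF s't, of "Poly_Mapping.single 0 1"]
      tdeg_add[OF tt, of "Poly_Mapping.single j 1"] tdeg_single[of 0 n] tdeg_single[OF jn] jn n
    by (simp add: is_term_def)
  then have deq: "tdeg s' = tdeg t" by simp
  have dl: "drl_less t s'" unfolding drl_less_def
    using deq t0 j0 by (auto simp: ls' intro!: exI[of _ 0])
  have wr': "\<And>s. is_term n s \<Longrightarrow> tdeg s = tdeg t \<Longrightarrow> drl_less t s \<Longrightarrow> s \<in> J"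
    using wr mg unfolding weakly_revlex_def J_def by blast
  have "s' \<in> J" using wr'[OF s't deq dl] .
  moreover have "tdvd s' u" unfolding tdvd_def
  proof
    fix k
    show "Poly_Mapping.lookup s' k \<le> Poly_Mapping.lookup u k"
    proof (cases "k = 0")
      case True then show ?thesis using t0 j0 by (simp add: ls')
    next
      case False
      then show ?thesis using tj tw lw unfolding tdvd_def
        by (cases "k = j") (auto simp: ls' dest: spec[of _ k])
    qed
  qed
  ultimately show False using lt_up[of s' n P u] u nu unfolding J_def by blast
qed

theorem proposition6p6:
  fixes n :: nat and d :: "nat \<Rightarrow> nat"
  assumes "infinite (UNIV :: 'a::field set)"
    and "moreno_socias TYPE('a)"
    and "n \<ge> 1"
  shows "generic n d (\<lambda>P :: nat \<Rightarrow> 'a mpoly_.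
           \<forall>u. is_term n u \<and> u \<notin> lt_ideal n P \<longrightarrow>
             (u + Poly_Mapping.single 0 1 \<notin> lt_ideal n P \<or>
              min_gen (lt_ideal n P) (u + Poly_Mapping.single 0 1)))"
proof -
  obtain U where U: "zariski_open n d U" "U \<noteq> {}"
    "\<forall>P\<in>U. weakly_revlex n (lt_ideal n (P :: nat \<Rightarrow> 'a mpoly_))"
    using assms(2) unfolding moreno_socias_def generic_def by blast
  show ?thesis unfolding generic_def
    using U core[OF _ assms(3)] by blast
qed

end
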